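(* Let $C$ be a coalgebra over a field and $A=C^*$. Let $I_1\subseteq I_2\subseteq\cdots$ be an ascending chain of ideals of $A$, each closed in the finite topology. Then $\bigcup_n I_n$ is closed in the finite topology if and only if the chain terminates, i.e. $I_n=I_{n+1}=\cdots$ for some $n$.
   Context: $C^*$ is the dual algebra of the coalgebra $C$ with convolution product. For a subspace $X\subseteq C$ let $X^\perp=\{f\in C^*\mid f(X)=0\}$, and for $Y\subseteq C^*$ let $Y^\perp=\{c\in C\mid f(c)=0\ \forall f\in Y\}$. A subspace $W\subseteq C^*$ is closed in the finite topology iff $W=W^{\perp\perp}$, equivalently $W=X^\perp$ for some subspace $X\subseteq C$. *)

theory Defs
  imports Complex_Main
begin

text \<open>The comultiplication is given by a finite representation
  delta c = [(c1_1,c2_1),...,(c1_m,c2_m)] of the tensor sum c1_i (x) c2_i. Since we have no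
  tensor product library, tensors are handled via their universal property: an element of
  C (x) C is determined by its values on all bilinear forms, and C (x) C (x) C by trilinear forms.\<close>

definition bilinear_form :: "('k::field \<Rightarrow> 'c::ab_group_add \<Rightarrow> 'c) \<Rightarrow> ('c \<Rightarrow> 'c \<Rightarrow> 'k) \<Rightarrow> bool" where
  "bilinear_form scale B \<longleftrightarrow>
     (\<forall>x. Vector_Spaces.linear scale (*) (B x)) \<and>
     (\<forall>y. Vector_Spaces.linear scale (*) (\<lambda>x. B x y))"

definition trilinear_form :: "('k::field \<Rightarrow> 'c::ab_group_add \<Rightarrow> 'c) \<Rightarrow> ('c \<Rightarrow> 'c \<Rightarrow> 'c \<Rightarrow> 'k) \<Rightarrow> bool" where
  "trilinear_form scale T \<longleftrightarrow>
     (\<forall>y z. Vector_Spaces.linear scale (*) (\<lambda>x. T x y z)) \<and>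
     (\<forall>x z. Vector_Spaces.linear scale (*) (\<lambda>y. T x y z)) \<and>
     (\<forall>x y. Vector_Spaces.linear scale (*) (\<lambda>z. T x y z))"

definition coalgebra ::
  "('k::field \<Rightarrow> 'c::ab_group_add \<Rightarrow> 'c) \<Rightarrow> ('c \<Rightarrow> ('c \<times> 'c) list) \<Rightarrow> ('c \<Rightarrow> 'k) \<Rightarrow> bool" where
  "coalgebra scale delta eps \<longleftrightarrow>
     vector_space scale \<and>
     Vector_Spaces.linear scale (*) eps \<and>
     \<comment> \<open>linearity of the comultiplication\<close>
     (\<forall>B. bilinear_form scale B \<longrightarrow>
        Vector_Spaces.linear scale (*) (\<lambda>c. \<Sum>(x,y)\<leftarrow>delta c. B x y)) \<and>
     \<comment> \<open>coassociativity\<close>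
     (\<forall>T c. trilinear_form scale T \<longrightarrow>
        (\<Sum>(x,y)\<leftarrow>delta c. \<Sum>(u,v)\<leftarrow>delta x. T u v y) =
        (\<Sum>(x,y)\<leftarrow>delta c. \<Sum>(u,v)\<leftarrow>delta y. T x u v)) \<and>
     \<comment> \<open>counit\<close>
     (\<forall>c. (\<Sum>(x,y)\<leftarrow>delta c. scale (eps x) y) = c) \<and>
     (\<forall>c. (\<Sum>(x,y)\<leftarrow>delta c. scale (eps y) x) = c)"

definition dual :: "('k::field \<Rightarrow> 'c::ab_group_add \<Rightarrow> 'c) \<Rightarrow> ('c \<Rightarrow> 'k) set" where
  "dual scale = {f. Vector_Spaces.linear scale (*) f}"

definition conv :: "('c \<Rightarrow> ('c \<times> 'c) list) \<Rightarrow> ('c \<Rightarrow> 'k::field) \<Rightarrow> ('c \<Rightarrow> 'k) \<Rightarrow> 'c \<Rightarrow> 'k" where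
  "conv delta f g = (\<lambda>c. \<Sum>(x,y)\<leftarrow>delta c. f x * g y)"

definition dual_ideal ::
  "('k::field \<Rightarrow> 'c::ab_group_add \<Rightarrow> 'c) \<Rightarrow> ('c \<Rightarrow> ('c \<times> 'c) list) \<Rightarrow> ('c \<Rightarrow> 'k) set \<Rightarrow> bool" where
  "dual_ideal scale delta I \<longleftrightarrow>
     I \<subseteq> dual scale \<and> (\<lambda>_. 0) \<in> I \<and>
     (\<forall>f\<in>I. \<forall>g\<in>I. (\<lambda>c. f c + g c) \<in> I) \<and>
     (\<forall>a. \<forall>f\<in>I. (\<lambda>c. a * f c) \<in> I) \<and>
     (\<forall>f\<in>I. \<forall>g\<in>dual scale. conv delta f g \<in> I \<and> conv delta g f \<in> I)"

definition perpC :: "('k::field \<Rightarrow> 'c::ab_group_add \<Rightarrow> 'c) \<Rightarrow> 'c set \<Rightarrow> ('c \<Rightarrow> 'k) set" where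
  "perpC scale X = {f \<in> dual scale. \<forall>x\<in>X. f x = 0}"

definition perpD :: "('c \<Rightarrow> 'k::field) set \<Rightarrow> 'c set" where
  "perpD Y = {c. \<forall>f\<in>Y. f c = 0}"

definition finite_closed :: "('k::field \<Rightarrow> 'c::ab_group_add \<Rightarrow> 'c) \<Rightarrow> ('c \<Rightarrow> 'k) set \<Rightarrow> bool" where
  "finite_closed scale W \<longleftrightarrow> W = perpC scale (perpD W)"

end

theory Submission
  imports Defs
begin

lemma field_vs: "vector_space ((*) :: 'k::field \<Rightarrow> 'k \<Rightarrow> 'k)"
  by unfold_locales (auto simp: algebra_simps)

theorem lemma3p2:
  fixes scale :: "'k::field \<Rightarrow> 'c::ab_group_add \<Rightarrow> 'c"
    and delta :: "'c \<Rightarrow> ('c \<times> 'c) list"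
    and eps :: "'c \<Rightarrow> 'k"
    and I :: "nat \<Rightarrow> ('c \<Rightarrow> 'k) set"
  assumes "coalgebra scale delta eps"
    and "\<And>n. dual_ideal scale delta (I n)"
    and "\<And>n. finite_closed scale (I n)"
    and "\<And>n. I n \<subseteq> I (Suc n)"
  shows "finite_closed scale (\<Union>n. I n) \<longleftrightarrow> (\<exists>n. \<forall>m\<ge>n. I m = I n)"
proof -
  have vs: "vector_space scale" using assms(1) unfolding coalgebra_def by blast
  interpret V: vector_space scale by (rule vs)
  interpret P: vector_space_pair scale "(*) :: 'k \<Rightarrow> 'k \<Rightarrow> 'k"
    unfolding vector_space_pair_def using vs field_vs by blast
  have mono: "m \<le> n \<Longrightarrow> I m \<subseteq> I n" for m n
    using lift_Suc_mono_le[of I, OF assms(4)] by blast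
  have Idual: "I n \<subseteq> dual scale" for n using assms(2) unfolding dual_ideal_def by blast
  have sub: "V.subspace (perpD Y)" if "Y \<subseteq> dual scale" for Y
  proof -
    have "f x = 0 \<and> f y = 0 \<longrightarrow> f (x + y) = 0" "f x = 0 \<longrightarrow> f (scale a x) = 0" "f 0 = 0"
      if "f \<in> Y" for f x y a
    proof -
      have l: "Vector_Spaces.linear scale (*) f" using that \<open>Y \<subseteq> dual scale\<close> unfolding dual_def by blast
      show "f x = 0 \<and> f y = 0 \<longrightarrow> f (x + y) = 0" using P.linear_add[OF l] by simp
      show "f x = 0 \<longrightarrow> f (scale a x) = 0" using P.linear_scale[OF l] by simp
      show "f 0 = 0" using P.linear_0[OF l] .
    qed
    then show ?thesis unfolding V.subspace_def perpD_def by auto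
  qed
  have cl: "I n = perpC scale (perpD (I n))" for n using assms(3) unfolding finite_closed_def by blast
  show ?thesis
  proof
    assume "\<exists>n. \<forall>m\<ge>n. I m = I n"
    then obtain n where n: "\<forall>m\<ge>n. I m = I n" by blast
    have "(\<Union>n. I n) = I n"
    proof (rule antisym)
      show "(\<Union>n. I n) \<subseteq> I n"
      proof
        fix f assume "f \<in> (\<Union>n. I n)"
        then obtain m where "f \<in> I m" by blast
        then show "f \<in> I n"
        proof (cases "m \<le> n")
          case True then show ?thesis using mono[of m n] \<open>f \<in> I m\<close> by blast
        next
          case False then have "I m = I n" using spec[OF n, of m] by linarith
          then show ?thesis using \<open>f \<in> I m\<close> by simp
        qed
      qed
    qed blast
    then show "finite_closed scale (\<Union>n. I n)" using assms(3)[of n] by (simp only:)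
  next
    assume ucl: "finite_closed scale (\<Union>n. I n)"
    show "\<exists>n. \<forall>m\<ge>n. I m = I n"
    proof (rule ccontr)
      assume ns: "\<not> (\<exists>n. \<forall>m\<ge>n. I m = I n)"
      have ex: "\<exists>m. m > n \<and> I m \<noteq> I n" for n
      proof -
        obtain m where "m \<ge> n" "I m \<noteq> I n" using ns by blast
        then show ?thesis by (intro exI[of _ m]) (auto simp: le_less)
      qed
      define s where "s = rec_nat 0 (\<lambda>_ k. SOME m. m > k \<and> I m \<noteq> I k)"
      have sS: "s (Suc k) > s k \<and> I (s (Suc k)) \<noteq> I (s k)" for k
        unfolding s_def using someI_ex[OF ex[of "rec_nat 0 (\<lambda>_ k. SOME m. m > k \<and> I m \<noteq> I k) k"]]
        by simp
      have smono: "strict_mono s" using sS strict_mono_Suc_iff by blast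
      define Y where "Y k = perpD (I (s k))" for k
      have Yanti: "j \<le> k \<Longrightarrow> Y k \<subseteq> Y j" for j k
        unfolding Y_def perpD_def using mono[of "s j" "s k"] strict_mono_mono[OF smono]
        by (auto simp: monoD)
      have Yne: "Y (Suc k) \<noteq> Y k" for k
        using sS[of k] cl[of "s k"] cl[of "s (Suc k)"] unfolding Y_def by metis
      have "\<exists>x. x \<in> Y k \<and> x \<notin> Y (Suc k)" for k
        proof -
        have "Y (Suc k) \<subseteq> Y k" using Yanti[of k "Suc k"] by simp
        then show ?thesis using Yne[of k] by blast
      qed
      then obtain c where c: "\<And>k. c k \<in> Y k" "\<And>k. c k \<notin> Y (Suc k)" by metis
      define X where "X = (\<Inter>n. perpD (I n))"
      have XY: "X \<subseteq> Y k" for k unfolding X_def Y_def by blast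
      have Xsub: "V.subspace X" unfolding X_def
        by (rule V.subspace_Inter) (use sub[OF Idual] in auto)
      obtain B where B: "B \<subseteq> X" "V.independent B" "X \<subseteq> V.span B"
        by (rule V.basis_exists[of X])
      have indK: "V.independent (B \<union> c ` K)" if "finite K" for K
        using that
      proof (induction K rule: finite_linorder_min_induct)
        case empty then show ?case using B(2) by simp
        next
        case (insert b A)
        have "B \<union> c ` A \<subseteq> Y (Suc b)"
        proof -
          have "c a \<in> Y (Suc b)" if "a \<in> A" for a
          proof -
            have "Suc b \<le> a" using insert(2) that by (simp add: Suc_le_eq)
            then show ?thesis using c(1)[of a] Yanti[of "Suc b" a] by blast
          qed
          then show ?thesis using B(1) XY[of "Suc b"] by blast
        qed
        then have "V.span (B \<union> c ` A) \<subseteq> Y (Suc b)"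
          using V.span_minimal sub[OF Idual] unfolding Y_def by blast
        then have "c b \<notin> V.span (B \<union> c ` A)" using c(2)[of b] by blast
        then have "V.independent (insert (c b) (B \<union> c ` A))"
          using V.independent_insertI insert(3) by blast
        then show ?case by simp
      qed
      define T where "T = B \<union> range c"
      have "V.independent (\<Union>(range (\<lambda>k. B \<union> c ` {..<k})))"
      proof (rule V.independent_Union_directed)
        fix C D assume "C \<in> range (\<lambda>k. B \<union> c ` {..<k})" "D \<in> range (\<lambda>k. B \<union> c ` {..<k})"
        then obtain i j where "C = B \<union> c ` {..<i}" "D = B \<union> c ` {..<j}" by blast
        then show "C \<subseteq> D \<or> D \<subseteq> C" by (cases "i \<le> j") auto
      next
        fix C assume "C \<in> range (\<lambda>k. B \<union> c ` {..<k})"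
        then show "V.independent C" using indK by blast
      qed
      moreover have "\<Union>(range (\<lambda>k. B \<union> c ` {..<k})) = T"
        unfolding T_def by auto
      ultimately have indT: "V.independent T" by simp
      obtain g where g: "Vector_Spaces.linear scale (*) g"
        "\<forall>x\<in>T. g x = (if x \<in> B then 0 else 1)"
        using P.linear_independent_extend[OF indT, of "\<lambda>x. if x \<in> B then 0 else 1"] by blast
      have cB: "c k \<notin> B" for k using c(2)[of k] XY[of "Suc k"] B(1) by blast
      have gc: "g (c k) = 1" for k using g(2) cB[of k] unfolding T_def by auto
      have g0: "g x = 0" if "x \<in> X" for x
        using P.linear_eq_0_on_span[OF g(1), of B x] g(2) B(3) that unfolding T_def by auto
      have "perpD (\<Union>n. I n) = X" unfolding perpD_def X_def by blast
      then have "g \<in> (\<Union>n. I n)"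
        using ucl g g0 unfolding finite_closed_def perpC_def dual_def by auto
      then obtain m where "g \<in> I m" by blast
      then have "g \<in> I (s m)" using mono[of m "s m"] strict_mono_imp_increasing[OF smono] by blast
      then have "g (c m) = 0" using c(1)[of m] unfolding Y_def perpD_def by blast
      then show False using gc[of m] by simp
    qed
  qed
qed

end
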